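(* Let $\Gamma_\mu:\mathbb{R}^N_+\to\mathbb{R}^N_+$ be monotone, let $\kappa_0>0$, $\kappa_\Gamma>\kappa_h>0$, $\delta>0$, let $\phi$ be as in the context, and let $c\in\mathbb{R}^N_+$ with $\|c\|<\kappa_\Gamma/2$. Let $\tau=\langle y^1,\dots,y^{N+1}\rangle$ be an $N$-simplex of the triangulation $\tilde K_1(\delta)$ with vertices $y^j=(v^j,t_j)\in\mathbb{R}^N_+\times\{0,1\}$ such that $\|v^j\|>\kappa_\Gamma+\kappa_0+\delta$ for all $j=1,\dots,N+1$. Then $\tau$ is not complete (with respect to the labeling $l$ defined below).
   Context: Order on $\mathbb{R}^N$: $v\ge w$ iff $v_i\ge w_i$ for all $i$; $v>w$ iff $v\ge w$, $v\ne w$; $v\gg w$ iff $v_i>w_i$ for all $i$. $\|\cdot\|$ is the Euclidean norm, $e=(1,\dots,1)^\top$. Given $\kappa_0>0$, $\kappa_\Gamma>\kappa_h>0$, define $\phi:\mathbb{R}^N_+\to\mathbb{R}^N$ by $\phi(v)=\Gamma_\mu(v)\big(1+\min\{0,\frac{\kappa_\Gamma-2\|v\|}{\|v\|+\kappa_0}\}\big)+\max\{0,\kappa_h-2\|v\|\}e$. Triangulation $\tilde K_1(\delta)$: let $P=\mathrm{diag}(\delta,\dots,\delta,1)\in\mathbb{R}^{(N+1)\times(N+1)}$; its $(N+1)$-simplices are $\langle y^1,\dots,y^{N+2}\rangle$ where $y^1=(\delta z,0)$ with $z\in\mathbb{Z}^N$, and $y^{i+1}=y^i+Pe_{\pi(i)}$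 for $i=1,\dots,N+1$, $\pi$ a permutation of $\{1,\dots,N+1\}$ ($e_k$ the $k$-th unit vector of $\mathbb{R}^{N+1}$); in particular $y^{N+2}=y^1+(\delta,\dots,\delta,1)^\top$, all vertices lie in $\mathbb{R}^N\times\{0,1\}$, and $y^1<y^2<\dots<y^{N+2}$. Its $N$-simplices are the facets of these $(N+1)$-simplices, with vertices listed in increasing order. Homotopy: $\vartheta(v,t)=(1-t)c+t\phi(v)$; labeling: $l(v,t)=\vartheta(v,t)-v$ for vertices $(v,t)\in\mathbb{R}^N_+\times\{0,1\}$. Labeling matrix of $\tau=\langle y^1,\dots,y^{N+1}\rangle$: the $(N+1)\times(N+1)$ matrix $L(\tau)$ with $j$-th column $(1,l(y^j)^\top)^\top$. A matrix $W$ is lexicographically positive ($W\succ0$) if the first nonzero entry of each row is positive. $\tau$ is complete if there is $W$ with $L(\tau)W=I_{N+1}$ and $W\succ0$. *)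

theory Defs
  imports "HOL-Combinatorics.Permutations" "Jordan_Normal_Form.Matrix"
begin

text \<open>Vectors of R^N are Jordan_Normal_Form vectors of dimension N; the
(N+1)x(N+1) labeling matrix is a Jordan_Normal_Form matrix. Indices are 0-based.\<close>

definition enorm :: "real vec \<Rightarrow> real" where
  "enorm v = sqrt (\<Sum>i<dim_vec v. (v $ i)\<^sup>2)"

definition nonneg_vec :: "nat \<Rightarrow> real vec \<Rightarrow> bool" where
  "nonneg_vec N v \<longleftrightarrow> v \<in> carrier_vec N \<and> (\<forall>i<N. 0 \<le> v $ i)"

definition vec_le :: "real vec \<Rightarrow> real vec \<Rightarrow> bool" where
  "vec_le w v \<longleftrightarrow> dim_vec w = dim_vec v \<and> (\<forall>i<dim_vec v. w $ i \<le> v $ i)"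

definition monotone_map :: "nat \<Rightarrow> (real vec \<Rightarrow> real vec) \<Rightarrow> bool" where
  "monotone_map N G \<longleftrightarrow>
     (\<forall>v. nonneg_vec N v \<longrightarrow> nonneg_vec N (G v)) \<and>
     (\<forall>v w. nonneg_vec N v \<longrightarrow> nonneg_vec N w \<longrightarrow> vec_le w v \<longrightarrow> vec_le (G w) (G v))"

definition phi :: "nat \<Rightarrow> (real vec \<Rightarrow> real vec) \<Rightarrow> real \<Rightarrow> real \<Rightarrow> real \<Rightarrow> real vec \<Rightarrow> real vec" where
  "phi N G k0 kG kh v =
     (1 + min 0 ((kG - 2 * enorm v) / (enorm v + k0))) \<cdot>\<^sub>v G v
     + max 0 (kh - 2 * enorm v) \<cdot>\<^sub>v vec N (\<lambda>_. 1)"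

definition label :: "nat \<Rightarrow> real vec \<Rightarrow> (real vec \<Rightarrow> real vec) \<Rightarrow> real \<Rightarrow> real \<Rightarrow> real \<Rightarrow>
                      real vec \<times> real \<Rightarrow> real vec" where
  "label N c G k0 kG kh y =
     ((1 - snd y) \<cdot>\<^sub>v c + snd y \<cdot>\<^sub>v phi N G k0 kG kh (fst y)) - fst y"

text \<open>Vertex k (k = 0..N+1) of the (N+1)-simplex of K1~(delta) with base point
  (delta z, 0) and permutation pi of {0..N} (coordinate N is the t-coordinate):
  y_0 = (delta z, 0), y_(k+1) = y_k + P e_(pi k).\<close>
definition K1_vertex :: "nat \<Rightarrow> real \<Rightarrow> (nat \<Rightarrow> int) \<Rightarrow> (nat \<Rightarrow> nat) \<Rightarrow> nat \<Rightarrow> real vec \<times> real" where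
  "K1_vertex N \<delta> z \<pi> k =
     (vec N (\<lambda>j. \<delta> * (of_int (z j) + (if j \<in> \<pi> ` {..<k} then 1 else 0))),
      (if N \<in> \<pi> ` {..<k} then 1 else 0))"

text \<open>The facet obtained by omitting vertex m (m = 0..N+1), vertices listed in
  increasing order: vertex j = 0..N of the facet.\<close>
definition facet_vertex :: "nat \<Rightarrow> real \<Rightarrow> (nat \<Rightarrow> int) \<Rightarrow> (nat \<Rightarrow> nat) \<Rightarrow> nat \<Rightarrow> nat \<Rightarrow> real vec \<times> real" where
  "facet_vertex N \<delta> z \<pi> m j = K1_vertex N \<delta> z \<pi> (if j < m then j else Suc j)"

definition labeling_matrix :: "nat \<Rightarrow> (real vec \<times> real \<Rightarrow> real vec) \<Rightarrow> (nat \<Rightarrow> real vec \<times> real) \<Rightarrow> real mat" where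
  "labeling_matrix N l y = mat (N+1) (N+1) (\<lambda>(i,j). if i = 0 then 1 else l (y j) $ (i - 1))"

definition lex_pos :: "real mat \<Rightarrow> bool" where
  "lex_pos W \<longleftrightarrow> (\<forall>i<dim_row W. \<exists>j<dim_col W. 0 < W $$ (i,j) \<and> (\<forall>k<j. W $$ (i,k) = 0))"

definition complete_simplex :: "nat \<Rightarrow> (real vec \<times> real \<Rightarrow> real vec) \<Rightarrow> (nat \<Rightarrow> real vec \<times> real) \<Rightarrow> bool" where
  "complete_simplex N l y \<longleftrightarrow>
     (\<exists>W \<in> carrier_mat (N+1) (N+1). labeling_matrix N l y * W = 1\<^sub>m (N+1) \<and> lex_pos W)"

end

theory Submission
  imports Defs
begin

lemma enorm_mono:
  assumes "a \<in> carrier_vec N" "b \<in> carrier_vec N"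
    and "\<And>i. i < N \<Longrightarrow> 0 \<le> a $ i \<and> a $ i \<le> b $ i"
  shows "enorm a \<le> enorm b"
  unfolding enorm_def using assms
  by (auto intro!: real_sqrt_le_mono sum_mono power_mono)

lemma phi_comp_nonpos:
  assumes mono: "monotone_map N G" and v: "nonneg_vec N v"
    and far: "enorm v > kG + k0" and k0: "k0 > 0" and kh: "kh > 0" and khG: "kG > kh"
    and i: "i < N"
  shows "phi N G k0 kG kh v $ i \<le> 0"
proof -
  have Gv: "nonneg_vec N (G v)" using mono v unfolding monotone_map_def by blast
  hence dG: "dim_vec (G v) = N" and Gi: "0 \<le> G v $ i" using i unfolding nonneg_vec_def by auto
  define n where "n = enorm v"
  have npos: "n + k0 > 0" using far khG kh k0 n_def by linarith
  have "(kG - 2 * n) / (n + k0) < -1"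
    using npos far n_def by (simp add: divide_less_eq)
  hence co: "1 + min 0 ((kG - 2 * n) / (n + k0)) < 0" by linarith
  have mx: "max 0 (kh - 2 * n) = 0" using far khG kh k0 n_def by auto
  have "phi N G k0 kG kh v $ i = (1 + min 0 ((kG - 2 * n) / (n + k0))) * G v $ i"
    unfolding phi_def n_def[symmetric] mx using i dG by simp
  also have "\<dots> \<le> 0" using co Gi by (simp add: mult_nonpos_nonneg)
  finally show ?thesis .
qed

lemma label_comp:
  assumes "c \<in> carrier_vec N" "dim_vec (G (fst y)) = N" "dim_vec (fst y) = N" "i < N"
  shows "label N c G k0 kG kh y $ i
     = (1 - snd y) * c $ i + snd y * phi N G k0 kG kh (fst y) $ i - fst y $ i"
  using assms unfolding label_def phi_def by simp

theorem mainTheorem3: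
  fixes N :: nat and G :: "real vec \<Rightarrow> real vec"
    and k0 kG kh \<delta> :: real and c :: "real vec"
    and z :: "nat \<Rightarrow> int" and \<pi> :: "nat \<Rightarrow> nat" and m :: nat
  assumes mono: "monotone_map N G"
    and k0: "k0 > 0" and kh: "kh > 0" and khG: "kG > kh"
    and \<delta>: "\<delta> > 0"
    and c: "nonneg_vec N c" and c_small: "enorm c < kG / 2"
    and perm: "\<pi> permutes {..N}" and m: "m \<le> N + 1"
    and vert_nonneg: "\<forall>j\<le>N. nonneg_vec N (fst (facet_vertex N \<delta> z \<pi> m j))"
    and vert_far: "\<forall>j\<le>N. enorm (fst (facet_vertex N \<delta> z \<pi> m j)) > kG + k0 + \<delta>"
  shows "\<not> complete_simplex N (label N c G k0 kG kh) (facet_vertex N \<delta> z \<pi> m)"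
proof
  define y where "y = facet_vertex N \<delta> z \<pi> m"
  define l where "l = label N c G k0 kG kh"
  define L where "L = labeling_matrix N l y"
  assume "complete_simplex N (label N c G k0 kG kh) (facet_vertex N \<delta> z \<pi> m)"
  then obtain W where W: "W \<in> carrier_mat (N+1) (N+1)" and LW: "L * W = 1\<^sub>m (N+1)"
    and lp: "lex_pos W"
    unfolding complete_simplex_def L_def l_def y_def by blast
  define lam where "lam j = W $$ (j, 0)" for j
  have lam_nn: "0 \<le> lam j" if jN: "j < N+1" for j
  proof -
    obtain k where k: "k < dim_col W" "0 < W $$ (j,k)" "\<forall>k'<k. W $$ (j,k') = 0"
      using lp jN W unfolding lex_pos_def by (metis carrier_matD(1) carrier_matD(2))
    show ?thesis
    proof (cases "k = 0")
      case True then show ?thesis using k lam_def by simp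
    next
      case False then show ?thesis using k lam_def by simp
    qed
  qed
  have Lc: "L \<in> carrier_mat (N+1) (N+1)" unfolding L_def labeling_matrix_def by simp
  have row: "(\<Sum>j<N+1. L $$ (i,j) * lam j) = (if i = 0 then 1 else 0)" if "i < N+1" for i
  proof -
    have "(L * W) $$ (i,0) = (if i = 0 then 1 else 0)" using LW that by simp
    moreover have "(L * W) $$ (i,0) = (\<Sum>j<N+1. L $$ (i,j) * lam j)"
    proof -
      have "(L * W) $$ (i,0) = row L i \<bullet> col W 0" using that Lc W by simp
      also have "\<dots> = (\<Sum>j\<in>{0..<N+1}. row L i $ j * col W 0 $ j)"
        unfolding scalar_prod_def using W by simp
      also have "\<dots> = (\<Sum>j<N+1. L $$ (i,j) * lam j)"
        unfolding lessThan_atLeast0[symmetric] lam_def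
        by (rule sum.cong) (use that Lc W in auto)
      finally show ?thesis .
    qed
    ultimately show ?thesis by simp
  qed
  have sum1: "(\<Sum>j<N+1. lam j) = 1"
    using row[of 0] unfolding L_def labeling_matrix_def by simp
  have rowi: "(\<Sum>j<N+1. l (y j) $ i * lam j) = 0" if "i < N" for i
  proof -
    have "(\<Sum>j<N+1. L $$ (Suc i,j) * lam j) = (\<Sum>j<N+1. l (y j) $ i * lam j)"
      by (rule sum.cong) (use that in \<open>auto simp: L_def labeling_matrix_def\<close>)
    thus ?thesis using row[of "Suc i"] that by simp
  qed
  define v where "v j = fst (y j)" for j
  define t where "t j = snd (y j)" for j
  have vnn: "nonneg_vec N (v j)" if "j < N+1" for j using vert_nonneg that v_def y_def by auto
  have vfar: "enorm (v j) > kG + k0 + \<delta>" if "j < N+1" for j using vert_far that v_def y_def by auto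
  have t01: "0 \<le> t j \<and> t j \<le> 1" for j unfolding t_def y_def facet_vertex_def K1_vertex_def by auto
  have cc: "c \<in> carrier_vec N" using c unfolding nonneg_vec_def by auto
  have dGv: "dim_vec (G (v j)) = N" if "j < N+1" for j
    using mono vnn[OF that] unfolding monotone_map_def nonneg_vec_def by auto
  have dv: "dim_vec (v j) = N" if "j < N+1" for j using vnn[OF that] unfolding nonneg_vec_def by auto
  have phinp: "phi N G k0 kG kh (v j) $ i \<le> 0" if "j < N+1" "i < N" for i j
    using phi_comp_nonpos[OF mono vnn[OF that(1)] _ k0 kh khG that(2)] vfar[OF that(1)] \<delta> by linarith
  have vord: "v 0 $ i \<le> v j $ i" if "j < N+1" "i < N" for i j
  proof -
    define a where "a = (if (0::nat) < m then 0 else Suc 0)"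
    define b where "b = (if j < m then j else Suc j)"
    have ab: "a \<le> b" unfolding a_def b_def by auto
    have "\<pi> ` {..<a} \<subseteq> \<pi> ` {..<b}" using ab by auto
    hence "(if i \<in> \<pi> ` {..<a} then 1 else 0) \<le> (if i \<in> \<pi> ` {..<b} then 1 else (0::real))" by auto
    hence "\<delta> * (of_int (z i) + (if i \<in> \<pi> ` {..<a} then 1 else 0))
        \<le> \<delta> * (of_int (z i) + (if i \<in> \<pi> ` {..<b} then 1 else 0))"
      using \<delta> by (intro mult_left_mono) auto
    thus ?thesis using that unfolding v_def y_def facet_vertex_def K1_vertex_def a_def b_def
      by simp
  qed
  have comp: "0 \<le> v 0 $ i \<and> v 0 $ i \<le> c $ i" if i: "i < N" for i
  proof -
    have lj: "l (y j) $ i = (1 - t j) * c $ i + t j * phi N G k0 kG kh (v j) $ i - v j $ i"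
      if "j < N+1" for j
      unfolding l_def t_def v_def
      using label_comp[OF cc, of G "y j" i] dGv[OF that] dv[OF that] i v_def by simp
    have eq: "(\<Sum>j<N+1. lam j * v j $ i)
        = (\<Sum>j<N+1. lam j * ((1 - t j) * c $ i + t j * phi N G k0 kG kh (v j) $ i))"
    proof -
      have "(\<Sum>j<N+1. l (y j) $ i * lam j) = (\<Sum>j<N+1. lam j * ((1 - t j) * c $ i + t j * phi N G k0 kG kh (v j) $ i) - lam j * v j $ i)"
        by (rule sum.cong) (auto simp: lj algebra_simps)
      thus ?thesis using rowi[OF i] by (simp add: sum_subtractf)
    qed
    have ci: "0 \<le> c $ i" using c i unfolding nonneg_vec_def by auto
    have "(\<Sum>j<N+1. lam j * ((1 - t j) * c $ i + t j * phi N G k0 kG kh (v j) $ i))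
        \<le> (\<Sum>j<N+1. lam j * c $ i)"
    proof (rule sum_mono)
      fix j assume j: "j \<in> {..<N+1}"
      have "(1 - t j) * c $ i \<le> c $ i" using t01[of j] ci by (simp add: mult_left_le_one_le)
      moreover have "t j * phi N G k0 kG kh (v j) $ i \<le> 0"
        using t01[of j] phinp[of j i] j i by (simp add: mult_nonneg_nonpos)
      ultimately show "lam j * ((1 - t j) * c $ i + t j * phi N G k0 kG kh (v j) $ i) \<le> lam j * c $ i"
        using lam_nn[of j] j by (intro mult_left_mono) auto
    qed
    also have "\<dots> = c $ i" using sum1 by (simp add: sum_distrib_right[symmetric])
    finally have up: "(\<Sum>j<N+1. lam j * v j $ i) \<le> c $ i" using eq by simp
    have "(\<Sum>j<N+1. lam j * v 0 $ i) \<le> (\<Sum>j<N+1. lam j * v j $ i)"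
      using lam_nn vord i by (intro sum_mono mult_left_mono) auto
    moreover have "(\<Sum>j<N+1. lam j * v 0 $ i) = v 0 $ i" using sum1 by (simp add: sum_distrib_right[symmetric])
    moreover have "0 \<le> v 0 $ i" using vnn[of 0] i unfolding nonneg_vec_def by auto
    ultimately show ?thesis using up by linarith
  qed
  have "enorm (v 0) \<le> enorm c"
    using enorm_mono[OF _ cc comp] vnn[of 0] unfolding nonneg_vec_def by auto
  moreover have "enorm (v 0) > kG + k0 + \<delta>" using vfar[of 0] by simp
  ultimately show False using c_small k0 \<delta> kh khG by linarith
qed

end
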